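(* For every $b,c\in\mathbb R$, each of the following systems has an isochronous center at the origin $O$ with zero Urabe function: (i) $\dot x=-y+\frac b3xy+x^2-\frac b3x^3$, $\dot y=x+by^2-2xy-\frac b3x^2-\frac{4b}{3}x^2y+\left(\frac{b^2}{27}+2\right)x^3+\frac b3x^4$; (ii) $\dot x=-y+\frac b4xy+x^2-\frac b4x^3$, $\dot y=x+by^2-2xy-\frac{3b}{8}x^2-\frac{3b}{2}x^2y+\left(\frac{b^2}{16}+2\right)x^3+\left(-\frac{b^3}{256}+\frac b2\right)x^4$; (iii) $\dot x=-y-\frac{45}{8}x^2y+x^2+\frac{45}{8}x^4$, $\dot y=x-2xy-\frac{225}{8}xy^2+\frac{19}{2}x^3+45x^3y$; (iv) $\dot x=-y+\frac{c^2}{2}x^2y+x^2-\frac{c^2}{2}x^4$, $\dot y=x+cy^2-2xy-\frac c2x^2+c^2xy^2-2cx^2y+2x^3-c^2x^3y+cx^4$.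
   Context: For a real planar polynomial system $\dot x=-y+A(x,y)$, $\dot y=x+B(x,y)$, with $A,B$ polynomials having no terms of degree $<2$, the origin $O$ is an isochronous center if there is a punctured neighborhood of $O$ in which every orbit is a closed orbit surrounding $O$ and all these orbits have the same period. Zero Urabe function: write the system as $\dot x=p_0(x)+p_1(x)y$, $\dot y=q_0(x)+q_1(x)y+q_2(x)y^2$ ($p_0(0)=q_0(0)=0$, $p_1(0)\ne0$), where it holds that $-\frac{p_1'p_0}{p_1}+q_1+p_0'-\frac{2q_2p_0}{p_1}\equiv0$. Put $f=-\frac{q_2+p_1'}{p_1}$, $g=-\frac{q_2p_0^2}{p_1}+q_1p_0-p_1q_0$ (the change $z=p_0+p_1y$ gives $\dot x=z$, $\dot z=-g(x)-f(x)z^2$), $F(x)=\int_0^xf$, and $\xi$ near $0$ by $\frac12\xi(x)^2=\int_0^xg(s)e^{2F(s)}ds$, $x\xi(x)>0$ for $x\ne0$. The Urabe function of an isochronous center is the odd analytic $h$ with $\frac{\xi(x)}{1+h(\xi(x))}=g(x)e^{F(x)}$; "zero Urabe function" means $h\equiv0$, i.e. $\xi(x)=g(x)e^{F(x)}$ near $0$. *)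

theory Defs
  imports "HOL-Analysis.Analysis" "HOL-Computational_Algebra.Polynomial"
begin

text \<open>Planar vector fields are maps (real \<times> real) \<Rightarrow> (real \<times> real); the system is
  x' = fst (V (x,y)), y' = snd (V (x,y)).\<close>

definition is_solution :: "(real \<times> real \<Rightarrow> real \<times> real) \<Rightarrow> (real \<Rightarrow> real \<times> real) \<Rightarrow> bool" where
  "is_solution V \<phi> \<longleftrightarrow> (\<forall>t. (\<phi> has_vector_derivative V (\<phi> t)) (at t))"

definition isochronous_center :: "(real \<times> real \<Rightarrow> real \<times> real) \<Rightarrow> bool" where
  "isochronous_center V \<longleftrightarrow>
     (\<exists>U T. open U \<and> (0,0) \<in> U \<and> T > 0 \<and>
        (\<forall>p \<in> U - {(0,0)}. \<exists>\<phi>. is_solution V \<phi> \<and> \<phi> 0 = p \<and>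
            (\<forall>t. \<phi> (t + T) = \<phi> t) \<and> (\<forall>s. 0 < s \<and> s < T \<longrightarrow> \<phi> s \<noteq> p) \<and>
            (0,0) \<in> inside (range \<phi>)))"

text \<open>Data attached to the decomposition x' = p0(x) + p1(x) y,
  y' = q0(x) + q1(x) y + q2(x) y^2.\<close>

definition urabe_f :: "real poly \<Rightarrow> real poly \<Rightarrow> real \<Rightarrow> real" where
  "urabe_f p1 q2 x = - (poly q2 x + poly (pderiv p1) x) / poly p1 x"

definition urabe_g :: "real poly \<Rightarrow> real poly \<Rightarrow> real poly \<Rightarrow> real poly \<Rightarrow> real poly \<Rightarrow> real \<Rightarrow> real" where
  "urabe_g p0 p1 q0 q1 q2 x =
     - (poly q2 x * (poly p0 x)\<^sup>2 / poly p1 x) + poly q1 x * poly p0 x - poly p1 x * poly q0 x"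

definition urabe_F :: "real poly \<Rightarrow> real poly \<Rightarrow> real \<Rightarrow> real" where
  "urabe_F p1 q2 x = (LBINT s=ereal 0..ereal x. urabe_f p1 q2 s)"

definition zero_urabe :: "(real \<times> real \<Rightarrow> real \<times> real) \<Rightarrow> bool" where
  "zero_urabe V \<longleftrightarrow>
     (\<exists>p0 p1 q0 q1 q2 :: real poly.
        (\<forall>x y. V (x, y) = (poly p0 x + poly p1 x * y,
                            poly q0 x + poly q1 x * y + poly q2 x * y\<^sup>2)) \<and>
        poly p0 0 = 0 \<and> poly q0 0 = 0 \<and> poly p1 0 \<noteq> 0 \<and>
        (\<forall>x. poly p1 x \<noteq> 0 \<longrightarrow>
           - poly (pderiv p1) x * poly p0 x / poly p1 x + poly q1 x + poly (pderiv p0) x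
           - 2 * poly q2 x * poly p0 x / poly p1 x = 0) \<and>
        (\<exists>\<delta> > 0. \<exists>\<xi> :: real \<Rightarrow> real.
           (\<forall>x. \<bar>x\<bar> < \<delta> \<longrightarrow>
              (\<xi> x)\<^sup>2 / 2 = (LBINT s=ereal 0..ereal x.
                                urabe_g p0 p1 q0 q1 q2 s * exp (2 * urabe_F p1 q2 s)) \<and>
              (x \<noteq> 0 \<longrightarrow> x * \<xi> x > 0)) \<and>
           (\<forall>x. \<bar>x\<bar> < \<delta> \<longrightarrow> \<xi> x = urabe_g p0 p1 q0 q1 q2 x * exp (urabe_F p1 q2 x))))"

end

theory Submission
  imports Defs
begin


lemma g_red: fixes P0 P1 Q0 Q1 Q2 M X :: real
  assumes "P1 = - M" "P0 = X^2 * M" "M \<noteq> 0"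
  shows "- (Q2 * P0\<^sup>2 / P1) + Q1 * P0 - P1 * Q0 = M * (Q2 * X^4 + Q1 * X^2 + Q0)"
  using assms by (simp add: field_simps power2_eq_square power4_eq_xxxx)
lemma f_red: fixes Q2 dP1 P1 M N H' :: real
  assumes "P1 = - M" "M \<noteq> 0"
  shows "H' + M * N * (- (Q2 + dP1) / P1) = H' + N * (Q2 + dP1)"
  using assms by (simp add: field_simps)

lemma alg_core:
  fixes P0 P1 dP0 dP1 Q0 Q1 Q2 Z dZ f g :: real
  assumes nz: "P1 \<noteq> 0"
    and id: "- dP1 * P0 / P1 + Q1 + dP0 - 2 * Q2 * P0 / P1 = 0"
    and f: "f = - (Q2 + dP1) / P1"
    and g: "g = - (Q2 * P0\<^sup>2 / P1) + Q1 * P0 - P1 * Q0"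
    and dZ: "dZ = - g - f * Z\<^sup>2"
  shows "((dZ - dP0 * Z) * P1 - (Z - P0) * (dP1 * Z)) / (P1 * P1)
         = Q0 + Q1 * ((Z - P0) / P1) + Q2 * ((Z - P0) / P1)\<^sup>2"
proof -
  have q1: "Q1 = (dP1 * P0 - dP0 * P1 + 2 * Q2 * P0) / P1"
  proof -
    have "(- dP1 * P0 / P1 + Q1 + dP0 - 2 * Q2 * P0 / P1) * P1 = 0" using id by simp
    then have "- dP1 * P0 + Q1 * P1 + dP0 * P1 - 2 * Q2 * P0 = 0"
      using nz by (simp add: algebra_simps)
    then show ?thesis using nz by (simp add: field_simps)
  qed
  show ?thesis unfolding dZ f g q1 using nz
    by (simp add: field_simps power2_eq_square)
qed

lemma norm_polar: "r \<ge> 0 \<Longrightarrow> norm (r * cos x, r * sin x) = (r::real)"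
proof -
  assume r: "r \<ge> 0"
  have e: "(r * cos x)\<^sup>2 + (r * sin x)\<^sup>2 = r\<^sup>2"
    by (simp add: power_mult_distrib flip: distrib_left)
  have "norm (r * cos x, r * sin x) = sqrt (r\<^sup>2)"
    by (simp only: norm_Pair real_norm_def power2_abs e)
  also have "\<dots> = r" using r by simp
  finally show ?thesis .
qed

lemma polar:
  fixes w :: "real \<times> real"
  assumes "norm w = r" "r > 0"
  obtains \<beta> where "w = (r * cos \<beta>, r * sin \<beta>)"
proof -
  have "sqrt ((fst w)\<^sup>2 + (snd w)\<^sup>2) = r"
    using assms by (cases w) (simp add: norm_Pair)
  then have "(fst w)\<^sup>2 + (snd w)\<^sup>2 = r\<^sup>2"
    by (metis real_sqrt_pow2 sum_power2_ge_zero)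
  then have "(fst w / r)\<^sup>2 + (snd w / r)\<^sup>2 = 1"
    using assms by (simp add: power_divide add_divide_distrib[symmetric])
  then obtain \<beta> where "fst w / r = cos \<beta>" "snd w / r = sin \<beta>"
    by (rule sincos_total_2pi) auto
  then have "w = (r * cos \<beta>, r * sin \<beta>)" using assms by (cases w) (simp add: field_simps)
  then show ?thesis by (rule that)
qed

locale urabe_setup =
  fixes V :: "real \<times> real \<Rightarrow> real \<times> real"
    and p0 p1 q0 q1 q2 :: "real poly" and G h h' :: "real \<Rightarrow> real" and \<delta> :: real
  assumes V_eq: "\<forall>x y. V (x, y) = (poly p0 x + poly p1 x * y,
                            poly q0 x + poly q1 x * y + poly q2 x * y\<^sup>2)"
    and p00: "poly p0 0 = 0" and q00: "poly q0 0 = 0"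
    and ident: "\<forall>x. poly p1 x \<noteq> 0 \<longrightarrow>
           - poly (pderiv p1) x * poly p0 x / poly p1 x + poly q1 x + poly (pderiv p0) x
           - 2 * poly q2 x * poly p0 x / poly p1 x = 0"
    and dpos: "\<delta> > 0"
    and p1nz: "\<And>x. \<bar>x\<bar> < \<delta> \<Longrightarrow> poly p1 x \<noteq> 0"
    and G0: "G 0 = 0"
    and dG: "\<And>x. \<bar>x\<bar> < \<delta> \<Longrightarrow> (G has_real_derivative urabe_f p1 q2 x) (at x)"
    and hg: "\<And>x. \<bar>x\<bar> < \<delta> \<Longrightarrow> h x = urabe_g p0 p1 q0 q1 q2 x"
    and dh: "\<And>x. \<bar>x\<bar> < \<delta> \<Longrightarrow> (h has_real_derivative h' x) (at x)"
    and hh: "\<And>x. \<bar>x\<bar> < \<delta> \<Longrightarrow> h' x + h x * urabe_f p1 q2 x = 1"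
begin

definition "E x = exp (G x)"
definition "xi x = h x * E x"
definition "a = \<delta> / 2"
definition "lo = xi (-a)"
definition "hi = xi a"
definition "r0 = min (- lo) hi"
definition "xinv = inv_into {-a..a} xi"

lemma a_pos: "a > 0" "a < \<delta>" using dpos by (auto simp: a_def)

lemma E_pos: "E x > 0" by (simp add: E_def)

lemma dE: "\<bar>x\<bar> < \<delta> \<Longrightarrow> (E has_real_derivative urabe_f p1 q2 x * E x) (at x)"
  unfolding E_def by (auto intro!: derivative_eq_intros dG)

lemma dxi: "\<bar>x\<bar> < \<delta> \<Longrightarrow> (xi has_real_derivative E x) (at x)"
proof -
  assume x: "\<bar>x\<bar> < \<delta>"
  have "(xi has_real_derivative h' x * E x + h x * (urabe_f p1 q2 x * E x)) (at x)"
    unfolding xi_def[abs_def] using DERIV_mult[OF dh[OF x] dE[OF x]] by (simp add: algebra_simps)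
  also have "h' x * E x + h x * (urabe_f p1 q2 x * E x) = (h' x + h x * urabe_f p1 q2 x) * E x"
    by (simp add: algebra_simps)
  finally show ?thesis using hh[OF x] by simp
qed

lemma xi_cont: "\<bar>x\<bar> < \<delta> \<Longrightarrow> isCont xi x"
  using dxi DERIV_isCont by blast

lemma xi0: "xi 0 = 0"
  using hg[of 0] dpos by (simp add: xi_def urabe_g_def p00 q00)

lemma xi_mono: "-a \<le> x \<Longrightarrow> x < y \<Longrightarrow> y \<le> a \<Longrightarrow> xi x < xi y"
  by (rule DERIV_pos_imp_increasing) (use a_pos dxi E_pos in \<open>force\<close>)+

lemma xi_inj: "inj_on xi {-a..a}"
  by (rule inj_onI) (metis atLeastAtMost_iff linorder_neqE_linordered_idom xi_mono order_less_irrefl)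

lemma lo_hi: "lo < 0" "0 < hi" "r0 > 0"
  using xi_mono[of "-a" 0] xi_mono[of 0 a] a_pos xi0 by (auto simp: lo_def hi_def r0_def)

lemma xinv_xi: "-a \<le> x \<Longrightarrow> x \<le> a \<Longrightarrow> xinv (xi x) = x"
  unfolding xinv_def using xi_inj by (simp add: inv_into_f_f)

lemma xi_xinv: assumes "lo \<le> u" "u \<le> hi" shows "-a \<le> xinv u" "xinv u \<le> a" "xi (xinv u) = u"
proof -
  obtain x where x: "-a \<le> x" "x \<le> a" "xi x = u"
  proof -
    have "\<forall>x. -a \<le> x \<and> x \<le> a \<longrightarrow> isCont xi x"
      using xi_cont a_pos by (auto simp: abs_le_iff)
    then show ?thesis using IVT[of xi "-a" u a] assms a_pos that by (auto simp: lo_def hi_def)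
  qed
  then show "-a \<le> xinv u" "xinv u \<le> a" "xi (xinv u) = u" using xinv_xi by auto
qed

lemma xinv_strict: assumes "lo < u" "u < hi" shows "-a < xinv u" "xinv u < a"
proof -
  have 1: "-a \<le> xinv u" "xinv u \<le> a" "xi (xinv u) = u" using xi_xinv assms by auto
  show "-a < xinv u" using 1 assms by (metis lo_def order_less_irrefl order_le_less)
  show "xinv u < a" using 1 assms by (metis hi_def order_less_irrefl order_le_less)
qed

lemma xinv0: "xinv 0 = 0"
  using xinv_xi[of 0] xi0 a_pos by simp

lemma dxinv: assumes "lo < u" "u < hi"
  shows "(xinv has_real_derivative inverse (E (xinv u))) (at u)"
proof -
  have x: "-a < xinv u" "xinv u < a" using xinv_strict assms by auto
  have u: "u = xi (xinv u)" using xi_xinv assms by auto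
  have c: "isCont xinv (xi (xinv u))"
    by (rule isCont_inverse_function2[OF x]) (use xinv_xi xi_cont a_pos in auto)
  show ?thesis
  proof (rule DERIV_inverse_function[where f=xi and g=xinv and x=u and D="E (xinv u)" and a=lo and b=hi])
    show "DERIV xi (xinv u) :> E (xinv u)" using dxi x a_pos by auto
  qed (use assms E_pos[of "xinv u"] xi_xinv c u in \<open>auto\<close>)
qed

definition "Phi q = (xi (fst q), (poly p0 (fst q) + poly p1 (fst q) * snd q) * E (fst q))"
definition "Psi w = (xinv (fst w), (snd w / E (xinv (fst w)) - poly p0 (xinv (fst w))) / poly p1 (xinv (fst w)))"

lemma r0_le: "r0 \<le> - lo" "r0 \<le> hi" by (auto simp: r0_def)

lemma in_lohi: "\<bar>u\<bar> < r0 \<Longrightarrow> lo < u \<and> u < hi"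
  using r0_le by auto

lemma xinv_range: "\<bar>u\<bar> < r0 \<Longrightarrow> \<bar>xinv u\<bar> < a"
proof -
  assume "\<bar>u\<bar> < r0"
  then have "lo < u" "u < hi" using in_lohi by auto
  then show ?thesis using xinv_strict[of u] by (auto simp: abs_less_iff)
qed

lemma Phi_Psi: assumes "\<bar>fst w\<bar> < r0" shows "Phi (Psi w) = w"
proof -
  have u: "lo < fst w" "fst w < hi" using in_lohi assms by auto
  have "\<bar>xinv (fst w)\<bar> < \<delta>" using xinv_range[OF assms] a_pos by simp
  then have nz: "poly p1 (xinv (fst w)) \<noteq> 0" by (rule p1nz)
  have e: "E (xinv (fst w)) \<noteq> 0" using E_pos[of "xinv (fst w)"] by simp
  show ?thesis using u nz e xi_xinv[of "fst w"]
    by (cases w) (simp add: Phi_def Psi_def field_simps)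
qed

lemma Psi_Phi: assumes "\<bar>fst q\<bar> \<le> a" shows "Psi (Phi q) = q"
proof -
  have x: "-a \<le> fst q" "fst q \<le> a" using assms by auto
  have "\<bar>fst q\<bar> < \<delta>" using assms a_pos by simp
  then have nz: "poly p1 (fst q) \<noteq> 0" by (rule p1nz)
  have e: "E (fst q) \<noteq> 0" using E_pos[of "fst q"] by simp
  show ?thesis using nz e xinv_xi[OF x]
    by (cases q) (simp add: Phi_def Psi_def field_simps)
qed

lemma Phi0: "Phi (0,0) = (0,0)"
  by (simp add: Phi_def xi0 p00)

lemma Psi0: "Psi (0,0) = (0,0)"
  by (simp add: Psi_def xinv0 p00)

lemma E_cont: "\<bar>x\<bar> < \<delta> \<Longrightarrow> isCont E x"
  using dE DERIV_isCont by blast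

lemma Psi_cont: assumes "\<bar>fst w\<bar> < r0" shows "isCont Psi w"
proof -
  have u: "lo < fst w" "fst w < hi" using in_lohi assms by auto
  have xr: "\<bar>xinv (fst w)\<bar> < \<delta>" using xinv_range[OF assms] a_pos by simp
  have nz: "poly p1 (xinv (fst w)) \<noteq> 0" using xr by (rule p1nz)
  have e: "E (xinv (fst w)) \<noteq> 0" using E_pos[of "xinv (fst w)"] by simp
  have c0: "isCont xinv (fst w)" using dxinv[OF u] DERIV_isCont by blast
  have c1: "isCont (\<lambda>w. xinv (fst w)) w"
    using isCont_o2[where f=fst and a=w and g=xinv] c0 by (simp add: continuous_intros)
  have c2: "isCont (\<lambda>w. E (xinv (fst w))) w"
    using isCont_o2[OF c1, where g=E] E_cont[OF xr] by simp
  have c3: "isCont (\<lambda>w. poly p0 (xinv (fst w))) w" "isCont (\<lambda>w. poly p1 (xinv (fst w))) w"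
    using c1 by (auto intro: continuous_intros)
  show ?thesis unfolding Psi_def[abs_def]
    using c1 c2 c3 nz e by (intro continuous_intros) auto
qed

lemma Phi_cont: assumes "\<bar>fst q\<bar> < \<delta>" shows "isCont Phi q"
proof -
  have c1: "isCont (\<lambda>q. xi (fst q)) q"
    using isCont_o2[where f=fst and a=q and g=xi] xi_cont[OF assms] by (simp add: continuous_intros)
  have c2: "isCont (\<lambda>q. E (fst q)) q"
    using isCont_o2[where f=fst and a=q and g=E] E_cont[OF assms] by (simp add: continuous_intros)
  show ?thesis unfolding Phi_def[abs_def]
    using c1 c2 by (intro continuous_intros) auto
qed

lemma sol:
  fixes \<alpha> r :: real
  assumes r: "0 < r" "r < r0"
  defines "u \<equiv> \<lambda>t. r * cos (\<alpha> - t)" and "v \<equiv> \<lambda>t. r * sin (\<alpha> - t)"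
  shows "is_solution V (\<lambda>t. Psi (u t, v t))"
  unfolding is_solution_def
proof
  fix t
  let ?X = "\<lambda>t. xinv (u t)"
  let ?x = "?X t"
  let ?e = "E ?x"
  have ub: "\<bar>u s\<bar> < r0" for s
  proof -
    have "r * \<bar>cos (\<alpha> - s)\<bar> \<le> r * 1"
      using r abs_cos_le_one[of "\<alpha> - s"] by (intro mult_left_mono) auto
    then have "r * \<bar>cos (\<alpha> - s)\<bar> < r0" using r by linarith
    then show ?thesis using r by (simp add: u_def abs_mult)
  qed
  have ul: "lo < u t" "u t < hi" using in_lohi ub[of t] by auto
  have xr: "\<bar>?x\<bar> < \<delta>" using xinv_range[OF ub[of t]] a_pos by simp
  have nz: "poly p1 ?x \<noteq> 0" using xr by (rule p1nz)
  have e: "?e \<noteq> 0" using E_pos[of ?x] by simp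
  have du: "(u has_real_derivative v t) (at t)"
    unfolding u_def v_def by (auto intro!: derivative_eq_intros)
  have dv: "(v has_real_derivative - u t) (at t)"
    unfolding u_def v_def by (auto intro!: derivative_eq_intros)
  have dX: "(?X has_real_derivative v t / ?e) (at t)"
    using DERIV_chain2[OF dxinv[OF ul] du] e by (simp add: field_simps)
  have dEX: "((\<lambda>t. E (?X t)) has_real_derivative urabe_f p1 q2 ?x * ?e * (v t / ?e)) (at t)"
    using DERIV_chain2[OF dE[OF xr] dX] by simp
  let ?dZ = "(- u t * ?e - v t * (urabe_f p1 q2 ?x * ?e * (v t / ?e))) / (?e * ?e)"
  have dZ: "((\<lambda>t. v t / E (?X t)) has_real_derivative ?dZ) (at t)"
    using DERIV_divide[OF dv dEX e] by simp
  have dP0: "((\<lambda>t. poly p0 (?X t)) has_real_derivative poly (pderiv p0) ?x * (v t / ?e)) (at t)"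
    using DERIV_chain2[OF poly_DERIV dX] by simp
  have dP1: "((\<lambda>t. poly p1 (?X t)) has_real_derivative poly (pderiv p1) ?x * (v t / ?e)) (at t)"
    using DERIV_chain2[OF poly_DERIV dX] by simp
  let ?Z = "v t / ?e"
  let ?dY = "((?dZ - poly (pderiv p0) ?x * ?Z) * poly p1 ?x - (?Z - poly p0 ?x) * (poly (pderiv p1) ?x * ?Z)) / (poly p1 ?x * poly p1 ?x)"
  have dY: "((\<lambda>t. (v t / E (?X t) - poly p0 (?X t)) / poly p1 (?X t)) has_real_derivative ?dY) (at t)"
    using DERIV_divide[OF DERIV_diff[OF dZ dP0] dP1 nz] by simp
  have ug: "u t = urabe_g p0 p1 q0 q1 q2 ?x * ?e"
    using xi_xinv[of "u t"] ul hg[OF xr] by (simp add: xi_def)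
  have dZeq: "?dZ = - urabe_g p0 p1 q0 q1 q2 ?x - urabe_f p1 q2 ?x * ?Z\<^sup>2"
  proof -
    have gen: "(- U * ee - W * (ff * ee * (W / ee))) / (ee * ee) = - gg - ff * (W / ee)\<^sup>2"
      if "U = gg * ee" "ee \<noteq> 0" for U ee W ff gg :: real
      using that by (simp add: field_simps power2_eq_square)
    show ?thesis by (rule gen[OF ug e])
  qed
  have Y': "?dY = poly q0 ?x + poly q1 ?x * ((?Z - poly p0 ?x) / poly p1 ?x)
        + poly q2 ?x * ((?Z - poly p0 ?x) / poly p1 ?x)\<^sup>2"
    by (rule alg_core[OF nz _ _ _ dZeq]) (use ident nz in \<open>auto simp: urabe_f_def urabe_g_def\<close>)
  have X': "v t / ?e = poly p0 ?x + poly p1 ?x * ((?Z - poly p0 ?x) / poly p1 ?x)"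
    using nz by (simp add: field_simps)
  have "((\<lambda>t. (?X t, (v t / E (?X t) - poly p0 (?X t)) / poly p1 (?X t))) has_vector_derivative
         (v t / ?e, ?dY)) (at t)"
    using dX dY by (intro has_vector_derivative_Pair) (simp_all add: has_real_derivative_iff_has_vector_derivative)
  moreover have "V (Psi (u t, v t)) = (v t / ?e, ?dY)"
  proof -
    have ps: "Psi (u t, v t) = (?x, (?Z - poly p0 ?x) / poly p1 ?x)" by (simp add: Psi_def)
    show ?thesis unfolding ps V_eq[rule_format] by (simp only: X'[symmetric] Y'[symmetric])
  qed
  ultimately show "((\<lambda>t. Psi (u t, v t)) has_vector_derivative V (Psi (u t, v t))) (at t)"
    by (simp add: Psi_def)
qed

lemma ub: "0 < r \<Longrightarrow> r < r0 \<Longrightarrow> \<bar>r * cos x\<bar> < r0"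
proof -
  assume r: "0 < r" "r < r0"
  have "r * \<bar>cos x\<bar> \<le> r * 1"
    using r abs_cos_le_one[of x] by (intro mult_left_mono) auto
  then have "r * \<bar>cos x\<bar> < r0" using r by linarith
  then show ?thesis using r by (simp add: abs_mult)
qed

lemma open_strip: "open {q :: real \<times> real. \<bar>fst q\<bar> < c}"
  by (rule open_Collect_less) (intro continuous_intros)+

lemma open_W: "open (Phi -` ball 0 c \<inter> {q. \<bar>fst q\<bar> < a})"
proof -
  have "continuous_on {q. \<bar>fst q\<bar> < a} Phi"
    using Phi_cont a_pos by (intro continuous_at_imp_continuous_on) auto
  then show ?thesis using continuous_on_open_vimage[OF open_strip] by blast
qed

lemma iso_pt:
  assumes pU: "p \<in> (Phi -` ball 0 r0 \<inter> {q. \<bar>fst q\<bar> < a}) - {(0, 0)}"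
  shows "\<exists>phi. is_solution V phi \<and> phi 0 = p \<and> (\<forall>t. phi (t + 2 * pi) = phi t) \<and>
          (\<forall>s. 0 < s \<and> s < 2 * pi \<longrightarrow> phi s \<noteq> p) \<and> (0, 0) \<in> inside (range phi)"
proof -
  define r where "r = norm (Phi p)"
  have pa: "\<bar>fst p\<bar> < a" and rr0: "r < r0" using pU by (auto simp: r_def)
  have pp: "Psi (Phi p) = p" using Psi_Phi pa by simp
  have r0': "r > 0"
  proof (rule ccontr)
    assume "\<not> r > 0"
    then have "Phi p = (0,0)" by (simp add: r_def zero_prod_def)
    then have "p = (0,0)" using pp Psi0 by simp
    then show False using pU by simp
  qed
  obtain \<alpha> where al: "Phi p = (r * cos \<alpha>, r * sin \<alpha>)"
    using polar[of "Phi p" r] r0' by (auto simp: r_def)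
  define u where "u = (\<lambda>t. r * cos (\<alpha> - t))"
  define v where "v = (\<lambda>t. r * sin (\<alpha> - t))"
  define phi where "phi = (\<lambda>t. Psi (u t, v t))"
  have Phiphi: "Phi (phi t) = (u t, v t)" for t
    unfolding phi_def by (rule Phi_Psi) (simp add: u_def ub[OF r0' rr0])
  have normuv: "norm (u t, v t) = r" for t
    using norm_polar r0' by (simp add: u_def v_def)
  show ?thesis
  proof -
    have S1: "is_solution V phi" unfolding phi_def u_def v_def by (rule sol[OF r0' rr0])
    have S2: "phi 0 = p" unfolding phi_def u_def v_def using pp al by simp
    have S3: "phi (t + 2 * pi) = phi t" for t
    proof -
    have "cos (\<alpha> - t) = cos (\<alpha> - (t + 2 * pi) + 2 * pi)" "sin (\<alpha> - t) = sin (\<alpha> - (t + 2 * pi) + 2 * pi)"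
      by (simp_all add: algebra_simps)
    then show "phi (t + 2 * pi) = phi t"
      unfolding phi_def u_def v_def by (simp only: cos_periodic sin_periodic)
    qed
    have S4: "phi s \<noteq> p" if s: "0 < s \<and> s < 2 * pi" for s
    proof
      assume "phi s = p"
      then have "(u s, v s) = (r * cos \<alpha>, r * sin \<alpha>)" using Phiphi[of s] al by simp
      then have c: "cos (\<alpha> - s) = cos \<alpha>" "sin (\<alpha> - s) = sin \<alpha>" using r0' by (auto simp: u_def v_def)
      have "cos s = cos (\<alpha> - (\<alpha> - s))" by simp
      also have "\<dots> = cos \<alpha> * cos (\<alpha> - s) + sin \<alpha> * sin (\<alpha> - s)" by (rule cos_diff)
      also have "\<dots> = 1" unfolding c by (simp add: power2_eq_square[symmetric])
      finally obtain n :: int where n: "s = real_of_int n * 2 * pi" using cos_one_2pi_int by blast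
      have "0 < real_of_int n" using s n by (simp add: zero_less_mult_iff)
      moreover have "real_of_int n < 1" using s n by simp
      ultimately have "0 < n" "n < 1" by simp_all
      then show False by simp
    qed
    let ?C = "range phi"
    let ?K = "connected_component_set (- ?C) (0, 0)"
    let ?Kc = "Psi ` cball 0 r"
    let ?W = "Phi -` ball 0 r \<inter> {q. \<bar>fst q\<bar> < a}"
    have notC: "(0, 0) \<notin> ?C"
    proof
      assume "(0, 0) \<in> ?C"
      then obtain t where "(0, 0) = phi t" by auto
      then have "(u t, v t) = (0, 0)" using Phiphi[of t] Phi0 by simp
      then show False using normuv[of t] r0' by simp
    qed
    have cKc: "compact ?Kc"
    proof (rule compact_continuous_image)
      show "continuous_on (cball 0 r) Psi"
      proof (intro continuous_at_imp_continuous_on ballI Psi_cont)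
        fix w :: "real \<times> real" assume "w \<in> cball 0 r"
        then have "norm w \<le> r" by simp
        moreover have "\<bar>fst w\<bar> \<le> norm w" using norm_fst_le[of "fst w" "snd w"] by simp
        ultimately show "\<bar>fst w\<bar> < r0" using rr0 by linarith
      qed
    qed simp
    have oW: "open ?W" by (rule open_W)
    have 1: "?W \<inter> (- ?Kc) \<inter> ?K = {}"
    proof -
      have "q \<in> ?Kc" if "q \<in> ?W" for q
      proof -
        have "q = Psi (Phi q)" using that Psi_Phi by simp
        moreover have "Phi q \<in> cball 0 r" using that by simp
        ultimately show ?thesis by blast
      qed
      then show ?thesis by blast
    qed
    have 2: "?K \<subseteq> ?W \<union> (- ?Kc)"
    proof
      fix q assume qK: "q \<in> ?K"
      then have qC: "q \<notin> ?C" using connected_component_subset by blast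
      show "q \<in> ?W \<union> (- ?Kc)"
      proof (cases "q \<in> ?Kc")
        case False then show ?thesis by simp
      next
        case True
        then obtain w where w: "w \<in> cball 0 r" "q = Psi w" by auto
        have nw: "norm w \<le> r" using w by simp
        have fw: "\<bar>fst w\<bar> < r0"
        proof -
          have "\<bar>fst w\<bar> \<le> norm w" using norm_fst_le[of "fst w" "snd w"] by simp
          then show ?thesis using nw rr0 by linarith
        qed
        have Pq: "Phi q = w" using w Phi_Psi[OF fw] by simp
        have "norm w < r"
        proof (rule ccontr)
          assume "\<not> norm w < r"
          then have "norm w = r" using nw by simp
          then obtain \<beta> where b: "w = (r * cos \<beta>, r * sin \<beta>)" using polar r0' by blast
          have "(u (\<alpha> - \<beta>), v (\<alpha> - \<beta>)) = w" using b by (simp add: u_def v_def)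
          then have "phi (\<alpha> - \<beta>) = q" using w by (simp add: phi_def)
          then show False using qC by auto
        qed
        moreover have "\<bar>fst q\<bar> < a" using w xinv_range[OF fw] by (simp add: Psi_def)
        ultimately show ?thesis using Pq by simp
      qed
    qed
    have 0: "(0, 0) \<in> ?K" using notC by (simp add: connected_component_refl)
    have "(0, 0) \<in> ?W" using Phi0 r0' a_pos by simp
    then have "?W \<inter> ?K \<noteq> {}" using 0 by blast
    then have "- ?Kc \<inter> ?K = {}"
      using connectedD[OF connected_connected_component oW _ 1 2] cKc compact_imp_closed
      by (auto simp: open_Compl)
    then have "?K \<subseteq> ?Kc" by blast
    then have "bounded ?K" using bounded_subset compact_imp_bounded[OF cKc] by blast
    then have S5: "(0, 0) \<in> inside ?C" unfolding inside_def using notC by simp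
    show ?thesis using S1 S2 S3 S4 S5 by blast
  qed
qed

lemma iso: "isochronous_center V"
  unfolding isochronous_center_def
proof (rule exI[where x="Phi -` ball 0 r0 \<inter> {q. \<bar>fst q\<bar> < a}"], rule exI[where x="2 * pi"], intro conjI)
  show "open (Phi -` ball 0 r0 \<inter> {q. \<bar>fst q\<bar> < a})" by (rule open_W)
  show "(0, 0) \<in> Phi -` ball 0 r0 \<inter> {q. \<bar>fst q\<bar> < a}" using Phi0 lo_hi a_pos by simp
qed (use iso_pt in auto)

lemma seg_sub: "\<bar>x\<bar> < a \<Longrightarrow> s \<in> {min 0 x..max 0 x} \<Longrightarrow> \<bar>s\<bar> < \<delta>"
  using a_pos by (auto simp: min_def max_def split: if_splits)

lemma f_cont: "\<bar>x\<bar> < a \<Longrightarrow> continuous_on {min 0 x..max 0 x} (urabe_f p1 q2)"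
  unfolding urabe_f_def[abs_def] using seg_sub p1nz
  by (intro continuous_intros) auto

lemma g_cont: "\<bar>x\<bar> < a \<Longrightarrow> continuous_on {min 0 x..max 0 x} (urabe_g p0 p1 q0 q1 q2)"
  unfolding urabe_g_def[abs_def] using seg_sub p1nz
  by (intro continuous_intros) auto

lemma FF: assumes x: "\<bar>x\<bar> < a" shows "urabe_F p1 q2 x = G x"
proof -
  have "(LBINT s=ereal 0..ereal x. urabe_f p1 q2 s) = G x - G 0"
  proof (rule interval_integral_FTC_finite[OF f_cont[OF x]])
    fix s assume "min 0 x \<le> s" "s \<le> max 0 x"
    then have "\<bar>s\<bar> < \<delta>" using seg_sub[OF x] by auto
    then show "(G has_vector_derivative urabe_f p1 q2 s) (at s within {min 0 x..max 0 x})"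
      using dG has_real_derivative_iff_has_vector_derivative has_field_derivative_at_within by blast
  qed
  then show ?thesis by (simp add: urabe_F_def G0)
qed

lemma xi_sign: "\<bar>x\<bar> < a \<Longrightarrow> x \<noteq> 0 \<Longrightarrow> x * xi x > 0"
proof -
  assume x: "\<bar>x\<bar> < a" "x \<noteq> 0"
  show ?thesis
  proof (cases "x < 0")
    case True
    then have "xi x < xi 0" using x by (intro xi_mono) auto
    then show ?thesis using True xi0 by (simp add: mult_neg_neg)
  next
    case False
    then have "xi 0 < xi x" using x by (intro xi_mono) auto
    then show ?thesis using False x xi0 by simp
  qed
qed

lemma zu: "zero_urabe V"
  unfolding zero_urabe_def
proof (intro exI conjI)
  show "\<forall>x y. V (x, y) = (poly p0 x + poly p1 x * y, poly q0 x + poly q1 x * y + poly q2 x * y\<^sup>2)"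
    by (rule V_eq)
  show "poly p0 0 = 0" "poly q0 0 = 0" by (rule p00, rule q00)
  show "poly p1 0 \<noteq> 0" using p1nz dpos by simp
  show "\<forall>x. poly p1 x \<noteq> 0 \<longrightarrow>
           - poly (pderiv p1) x * poly p0 x / poly p1 x + poly q1 x + poly (pderiv p0) x
           - 2 * poly q2 x * poly p0 x / poly p1 x = 0" by (rule ident)
  show "a > 0" by (rule a_pos)
  show "\<forall>x. \<bar>x\<bar> < a \<longrightarrow> xi x = urabe_g p0 p1 q0 q1 q2 x * exp (urabe_F p1 q2 x)"
    using FF hg a_pos by (auto simp: xi_def E_def)
  show "\<forall>x. \<bar>x\<bar> < a \<longrightarrow>
              (xi x)\<^sup>2 / 2 = (LBINT s=ereal 0..ereal x.
                                urabe_g p0 p1 q0 q1 q2 s * exp (2 * urabe_F p1 q2 s)) \<and>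
              (x \<noteq> 0 \<longrightarrow> x * xi x > 0)"
  proof (intro allI impI conjI)
    fix x assume x: "\<bar>x\<bar> < a"
    show "x \<noteq> 0 \<Longrightarrow> x * xi x > 0" using xi_sign x by blast
    have eqF: "\<forall>s\<in>{min 0 x..max 0 x}. exp (2 * G s) = exp (2 * urabe_F p1 q2 s)"
    proof
      fix s assume "s \<in> {min 0 x..max 0 x}"
      then have "\<bar>s\<bar> < a" using x by (auto simp: min_def max_def split: if_splits)
      then show "exp (2 * G s) = exp (2 * urabe_F p1 q2 s)" using FF by simp
    qed
    have cG: "continuous_on {min 0 x..max 0 x} (\<lambda>s. exp (2 * G s))"
    proof -
      have "continuous_on {min 0 x..max 0 x} G"
        using seg_sub[OF x] dG DERIV_isCont by (intro continuous_at_imp_continuous_on) blast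
      then show ?thesis by (intro continuous_intros)
    qed
    have cF: "continuous_on {min 0 x..max 0 x} (\<lambda>s. exp (2 * urabe_F p1 q2 s))"
      by (rule continuous_on_eq[OF cG]) (use eqF in blast)
    have "(LBINT s=ereal 0..ereal x. urabe_g p0 p1 q0 q1 q2 s * exp (2 * urabe_F p1 q2 s))
          = (xi x)\<^sup>2 / 2 - (xi 0)\<^sup>2 / 2"
    proof (rule interval_integral_FTC_finite)
      show "continuous_on {min 0 x..max 0 x} (\<lambda>s. urabe_g p0 p1 q0 q1 q2 s * exp (2 * urabe_F p1 q2 s))"
        by (rule continuous_on_mult[OF g_cont[OF x] cF])
      fix s assume s: "min 0 x \<le> s" "s \<le> max 0 x"
      then have sd: "\<bar>s\<bar> < \<delta>" using seg_sub[OF x] by auto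
      have sa: "\<bar>s\<bar> < a" using s x by (auto simp: min_def max_def split: if_splits)
      have "((\<lambda>s. (xi s)\<^sup>2 / 2) has_real_derivative (2 * xi s * E s) / 2) (at s)"
        using dxi[OF sd] by (auto intro!: derivative_eq_intros)
      moreover have "(2 * xi s * E s) / 2 = urabe_g p0 p1 q0 q1 q2 s * exp (2 * urabe_F p1 q2 s)"
        using FF[OF sa] hg[OF sd] by (simp add: xi_def E_def exp_double[symmetric] power2_eq_square mult_exp_exp)
      ultimately show "((\<lambda>s. (xi s)\<^sup>2 / 2) has_vector_derivative
          urabe_g p0 p1 q0 q1 q2 s * exp (2 * urabe_F p1 q2 s)) (at s within {min 0 x..max 0 x})"
        using has_real_derivative_iff_has_vector_derivative has_field_derivative_at_within by metis
    qed
    then show "(xi x)\<^sup>2 / 2 = (LBINT s=ereal 0..ereal x.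
                                urabe_g p0 p1 q0 q1 q2 s * exp (2 * urabe_F p1 q2 s))"
      by (simp add: xi0)
  qed
qed

lemma main: "isochronous_center V \<and> zero_urabe V"
  using iso zu by blast

end



lemma inst1:
  fixes b :: real
  shows "isochronous_center (\<lambda>(x::real, y::real).
     (- y + b/3 * x * y + x^2 - b/3 * x^3,
      x + b * y^2 - 2 * x * y - b/3 * x^2 - 4*b/3 * x^2 * y + (b^2/27 + 2) * x^3 + b/3 * x^4)) \<and>
    zero_urabe (\<lambda>(x::real, y::real).
     (- y + b/3 * x * y + x^2 - b/3 * x^3,
      x + b * y^2 - 2 * x * y - b/3 * x^2 - 4*b/3 * x^2 * y + (b^2/27 + 2) * x^3 + b/3 * x^4))"
proof -
  define \<delta> where "\<delta> = 1 / (1 + \<bar>b\<bar>)"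
  have dpos: "\<delta> > 0" by (simp add: \<delta>_def add_pos_nonneg)
  have mpos: "1 - b/3 * x > 0" if "\<bar>x\<bar> < \<delta>" for x
  proof -
    have "\<bar>b * x\<bar> \<le> \<bar>b\<bar> * \<delta>" using that by (simp add: abs_mult mult_left_mono)
    also have "\<dots> < 1" by (simp add: \<delta>_def field_simps)
    finally show ?thesis by (simp add: abs_less_iff)
  qed
  have "urabe_setup (\<lambda>(x::real, y::real).
     (- y + b/3 * x * y + x^2 - b/3 * x^3,
      x + b * y^2 - 2 * x * y - b/3 * x^2 - 4*b/3 * x^2 * y + (b^2/27 + 2) * x^3 + b/3 * x^4))
     [:0,0,1,-b/3:] [:-1,b/3:] [:0,1,-b/3,b^2/27+2,b/3:] [:0,-2,-4*b/3:] [:b:]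
     (\<lambda>x. -4 * ln (1 - b/3 * x))
     (\<lambda>x. (1 - b/3 * x) * (x - b/3 * x^2 + b^2/27 * x^3))
     (\<lambda>x. - b/3 * (x - b/3 * x^2 + b^2/27 * x^3) + (1 - b/3 * x) * (1 - 2*b/3 * x + b^2/9 * x^2))
     \<delta>"
  proof (unfold_locales)
    show "\<forall>x y. (\<lambda>(x::real, y::real).
     (- y + b/3 * x * y + x^2 - b/3 * x^3,
      x + b * y^2 - 2 * x * y - b/3 * x^2 - 4*b/3 * x^2 * y + (b^2/27 + 2) * x^3 + b/3 * x^4)) (x, y) =
      (poly [:0,0,1,-b/3:] x + poly [:-1,b/3:] x * y,
       poly [:0,1,-b/3,b^2/27+2,b/3:] x + poly [:0,-2,-4*b/3:] x * y + poly [:b:] x * y\<^sup>2)"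
      by (simp add: algebra_simps power2_eq_square power3_eq_cube power4_eq_xxxx)
  next
    show "\<forall>x. poly [:-1,b/3:] x \<noteq> 0 \<longrightarrow>
       - poly (pderiv [:-1,b/3:]) x * poly [:0,0,1,-b/3:] x / poly [:-1,b/3:] x + poly [:0,-2,-4*b/3:] x +
         poly (pderiv [:0,0,1,-b/3:]) x - 2 * poly [:b:] x * poly [:0,0,1,-b/3:] x / poly [:-1,b/3:] x = 0"
      by (auto simp: pderiv_pCons field_simps)
  next
    fix x :: real assume x: "\<bar>x\<bar> < \<delta>"
    have m: "1 - b/3 * x > 0" by (rule mpos[OF x])
    show "poly [:-1,b/3:] x \<noteq> 0" using m by (simp add: mult.commute)
    show "((\<lambda>x. -4 * ln (1 - b/3 * x)) has_real_derivative urabe_f [:-1,b/3:] [:b:] x) (at x)"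
      using m by (auto intro!: derivative_eq_intros simp: urabe_f_def pderiv_pCons field_simps)
    show "(1 - b/3 * x) * (x - b/3 * x^2 + b^2/27 * x^3) =
        urabe_g [:0,0,1,-b/3:] [:-1,b/3:] [:0,1,-b/3,b^2/27+2,b/3:] [:0,-2,-4*b/3:] [:b:] x"
      using m by (simp add: urabe_g_def field_simps) (simp add: algebra_simps power2_eq_square power3_eq_cube power4_eq_xxxx)
    show "((\<lambda>x. (1 - b/3 * x) * (x - b/3 * x^2 + b^2/27 * x^3)) has_real_derivative
       - b/3 * (x - b/3 * x^2 + b^2/27 * x^3) + (1 - b/3 * x) * (1 - 2*b/3 * x + b^2/9 * x^2)) (at x)"
      by (auto intro!: derivative_eq_intros simp: field_simps power2_eq_square)
    show "- b/3 * (x - b/3 * x^2 + b^2/27 * x^3) + (1 - b/3 * x) * (1 - 2*b/3 * x + b^2/9 * x^2) +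
       (1 - b/3 * x) * (x - b/3 * x^2 + b^2/27 * x^3) * urabe_f [:-1,b/3:] [:b:] x = 1"
      using m by (simp add: urabe_f_def pderiv_pCons field_simps) (simp add: algebra_simps power2_eq_square power3_eq_cube)
  qed (use dpos in auto)
  then show ?thesis by (rule urabe_setup.main)
qed




lemma inst2:
  fixes b c :: real
  shows "isochronous_center (\<lambda>(x::real, y::real).
     (- y + b/4 * x * y + x^2 - b/4 * x^3,
      x + b * y^2 - 2 * x * y - 3*b/8 * x^2 - 3*b/2 * x^2 * y + (b^2/16 + 2) * x^3
        + (b/2 - b^3/256) * x^4)) \<and> zero_urabe (\<lambda>(x::real, y::real).
     (- y + b/4 * x * y + x^2 - b/4 * x^3,
      x + b * y^2 - 2 * x * y - 3*b/8 * x^2 - 3*b/2 * x^2 * y + (b^2/16 + 2) * x^3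
        + (b/2 - b^3/256) * x^4))"
proof -
  define \<delta> where "\<delta> = 1 / (1 + \<bar>b\<bar>)"
  have dpos: "\<delta> > 0" by (simp add: \<delta>_def add_pos_nonneg)
  have mpos: "1 - b/4 * x > 0" if "\<bar>x\<bar> < \<delta>" for x
  proof -
    have "\<bar>b * x\<bar> \<le> \<bar>b\<bar> * \<delta>" using that by (simp add: abs_mult mult_left_mono)
    also have "\<dots> < 1" by (simp add: \<delta>_def field_simps)
    finally show ?thesis by (simp add: abs_less_iff)
  qed

  have "urabe_setup (\<lambda>(x::real, y::real).
     (- y + b/4 * x * y + x^2 - b/4 * x^3,
      x + b * y^2 - 2 * x * y - 3*b/8 * x^2 - 3*b/2 * x^2 * y + (b^2/16 + 2) * x^3
        + (b/2 - b^3/256) * x^4))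
     [:0,0,1,-b/4:] [:-1,b/4:] [:0,1,-3*b/8,b^2/16+2,b/2 - b^3/256:] [:0,-2,-3*b/2:] [:b:]
     (\<lambda>x. -5 * ln (1 - b/4 * x))
     (\<lambda>x. (1 - b/4 * x) * (x - 3*b/8 * x^2 + b^2/16 * x^3 - b^3/256 * x^4))
     (\<lambda>x. - b/4 * (x - 3*b/8 * x^2 + b^2/16 * x^3 - b^3/256 * x^4) + (1 - b/4 * x) * (1 - 3*b/4 * x + 3*b^2/16 * x^2 - b^3/64 * x^3))
     \<delta>"
  proof (unfold_locales)
    show "\<forall>x y. (\<lambda>(x::real, y::real).
     (- y + b/4 * x * y + x^2 - b/4 * x^3,
      x + b * y^2 - 2 * x * y - 3*b/8 * x^2 - 3*b/2 * x^2 * y + (b^2/16 + 2) * x^3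
        + (b/2 - b^3/256) * x^4)) (x, y) = (poly [:0,0,1,-b/4:] x + poly [:-1,b/4:] x * y, poly [:0,1,-3*b/8,b^2/16+2,b/2 - b^3/256:] x + poly [:0,-2,-3*b/2:] x * y + poly [:b:] x * y\<^sup>2)"
      by (simp add: algebra_simps power2_eq_square power3_eq_cube power4_eq_xxxx)
  next
    show "\<forall>x. poly [:-1,b/4:] x \<noteq> 0 \<longrightarrow>
       - poly (pderiv [:-1,b/4:]) x * poly [:0,0,1,-b/4:] x / poly [:-1,b/4:] x + poly [:0,-2,-3*b/2:] x +
         poly (pderiv [:0,0,1,-b/4:]) x - 2 * poly [:b:] x * poly [:0,0,1,-b/4:] x / poly [:-1,b/4:] x = 0"
      by (auto simp: pderiv_pCons field_simps; algebra)
  next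
    fix x :: real assume x: "\<bar>x\<bar> < \<delta>"
    note m = mpos[OF x]
    show "poly [:-1,b/4:] x \<noteq> 0" using m by (simp add: mult.commute algebra_simps)
    show "((\<lambda>x. -5 * ln (1 - b/4 * x)) has_real_derivative urabe_f [:-1,b/4:] [:b:] x) (at x)"
      using m by (auto intro!: derivative_eq_intros simp: urabe_f_def pderiv_pCons field_simps)
    show "(1 - b/4 * x) * (x - 3*b/8 * x^2 + b^2/16 * x^3 - b^3/256 * x^4) = urabe_g [:0,0,1,-b/4:] [:-1,b/4:] [:0,1,-3*b/8,b^2/16+2,b/2 - b^3/256:] [:0,-2,-3*b/2:] [:b:] x"
      using m by (simp add: urabe_g_def field_simps; algebra)
    show "((\<lambda>x. (1 - b/4 * x) * (x - 3*b/8 * x^2 + b^2/16 * x^3 - b^3/256 * x^4)) has_real_derivative - b/4 * (x - 3*b/8 * x^2 + b^2/16 * x^3 - b^3/256 * x^4) + (1 - b/4 * x) * (1 - 3*b/4 * x + 3*b^2/16 * x^2 - b^3/64 * x^3)) (at x)"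
      by (auto intro!: derivative_eq_intros simp: field_simps power2_eq_square)
    show "- b/4 * (x - 3*b/8 * x^2 + b^2/16 * x^3 - b^3/256 * x^4) + (1 - b/4 * x) * (1 - 3*b/4 * x + 3*b^2/16 * x^2 - b^3/64 * x^3) + ((1 - b/4 * x) * (x - 3*b/8 * x^2 + b^2/16 * x^3 - b^3/256 * x^4)) * urabe_f [:-1,b/4:] [:b:] x = 1"
      using m by (simp add: urabe_f_def pderiv_pCons field_simps; algebra)
  qed (use dpos in auto)
  then show ?thesis by (rule urabe_setup.main)
qed




lemma inst3:
  fixes b c :: real
  shows "isochronous_center (\<lambda>(x::real, y::real).
     (- y - 45/8 * x^2 * y + x^2 + 45/8 * x^4,
      x - 2 * x * y - 225/8 * x * y^2 + 19/2 * x^3 + 45 * x^3 * y)) \<and> zero_urabe (\<lambda>(x::real, y::real).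
     (- y - 45/8 * x^2 * y + x^2 + 45/8 * x^4,
      x - 2 * x * y - 225/8 * x * y^2 + 19/2 * x^3 + 45 * x^3 * y))"
proof -
  define \<delta> where "\<delta> = (1::real)"
  have dpos: "\<delta> > 0" by (simp add: \<delta>_def)
  have mpos: "1 + 45/8 * x^2 > 0" if "\<bar>x\<bar> < \<delta>" for x
  by (simp add: add_pos_nonneg)

  have "urabe_setup (\<lambda>(x::real, y::real).
     (- y - 45/8 * x^2 * y + x^2 + 45/8 * x^4,
      x - 2 * x * y - 225/8 * x * y^2 + 19/2 * x^3 + 45 * x^3 * y))
     [:0,0,1,0,45/8::real:] [:-1,0,-45/8::real:] [:0,1,0,19/2::real:] [:0,-2,0,45::real:] [:0,-225/8::real:]
     (\<lambda>x. -(7/2) * ln (1 + 45/8 * x^2))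
     (\<lambda>x. (1 + 45/8 * x^2) * (x + 15/2 * x^3 + 135/8 * x^5))
     (\<lambda>x. 45/4 * x * (x + 15/2 * x^3 + 135/8 * x^5) + (1 + 45/8 * x^2) * (1 + 45/2 * x^2 + 675/8 * x^4))
     \<delta>"
  proof (unfold_locales)
    show "\<forall>x y. (\<lambda>(x::real, y::real).
     (- y - 45/8 * x^2 * y + x^2 + 45/8 * x^4,
      x - 2 * x * y - 225/8 * x * y^2 + 19/2 * x^3 + 45 * x^3 * y)) (x, y) = (poly [:0,0,1,0,45/8::real:] x + poly [:-1,0,-45/8::real:] x * y, poly [:0,1,0,19/2::real:] x + poly [:0,-2,0,45::real:] x * y + poly [:0,-225/8::real:] x * y\<^sup>2)"
      by (simp add: algebra_simps power2_eq_square power3_eq_cube power4_eq_xxxx)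
  next
    show "\<forall>x. poly [:-1,0,-45/8::real:] x \<noteq> 0 \<longrightarrow>
       - poly (pderiv [:-1,0,-45/8::real:]) x * poly [:0,0,1,0,45/8::real:] x / poly [:-1,0,-45/8::real:] x + poly [:0,-2,0,45::real:] x +
         poly (pderiv [:0,0,1,0,45/8::real:]) x - 2 * poly [:0,-225/8::real:] x * poly [:0,0,1,0,45/8::real:] x / poly [:-1,0,-45/8::real:] x = 0"
      by (auto simp: pderiv_pCons field_simps; algebra)
  next
    fix x :: real assume x: "\<bar>x\<bar> < \<delta>"
    note m = mpos[OF x]
    have P1: "poly [:-1,0,-45/8::real:] x = -(1 + 45/8 * x^2)" by (simp add: algebra_simps power2_eq_square)
    have n: "1 + 45/8 * x^2 \<noteq> 0" using m by simp
    have "poly [:-1,0,-45/8::real:] x = -(1 + 45/8 * x^2)" by (simp add: power2_eq_square algebra_simps)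
    then show "poly [:-1,0,-45/8::real:] x \<noteq> 0" using m by simp
    show "((\<lambda>x. -(7/2) * ln (1 + 45/8 * x^2)) has_real_derivative urabe_f [:-1,0,-45/8::real:] [:0,-225/8::real:] x) (at x)"
    proof -
      have d0: "((\<lambda>x. 1 + 45/8 * x^2) has_real_derivative 45/8 * (2 * x)) (at x)"
        by (auto intro!: derivative_eq_intros)
      have D: "((\<lambda>x. -(7/2) * ln (1 + 45/8 * x^2)) has_real_derivative -(7/2) * (inverse (1 + 45/8 * x^2) * (45/8 * (2 * x)))) (at x)"
        by (rule DERIV_cmult[OF DERIV_chain2[OF DERIV_ln[OF m] d0]])
      have a1: "poly [:-1,0,-45/8::real:] x = - (1 + 45/8 * x^2)" by (simp add: algebra_simps power2_eq_square)
      have a2: "poly [:0,-225/8::real:] x + poly (pderiv [:-1,0,-45/8::real:]) x = - (315/8) * x"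
        by (simp add: pderiv_pCons algebra_simps)
      have "urabe_f [:-1,0,-45/8::real:] [:0,-225/8::real:] x = - (- (315/8) * x) / (- (1 + 45/8 * x^2))"
        by (simp only: urabe_f_def a1 a2)
      then have eq: "-(7/2) * (inverse (1 + 45/8 * x^2) * (45/8 * (2 * x))) = urabe_f [:-1,0,-45/8::real:] [:0,-225/8::real:] x"
        using m by (simp add: field_simps)
      show ?thesis using D unfolding eq .
    qed
    show "(1 + 45/8 * x^2) * (x + 15/2 * x^3 + 135/8 * x^5) = urabe_g [:0,0,1,0,45/8::real:] [:-1,0,-45/8::real:] [:0,1,0,19/2::real:] [:0,-2,0,45::real:] [:0,-225/8::real:] x"
      unfolding urabe_g_def P1 using n by (simp add: field_simps; algebra)
    show "((\<lambda>x. (1 + 45/8 * x^2) * (x + 15/2 * x^3 + 135/8 * x^5)) has_real_derivative 45/4 * x * (x + 15/2 * x^3 + 135/8 * x^5) + (1 + 45/8 * x^2) * (1 + 45/2 * x^2 + 675/8 * x^4)) (at x)"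
      by (auto intro!: derivative_eq_intros simp: field_simps power2_eq_square)
    show "45/4 * x * (x + 15/2 * x^3 + 135/8 * x^5) + (1 + 45/8 * x^2) * (1 + 45/2 * x^2 + 675/8 * x^4) + ((1 + 45/8 * x^2) * (x + 15/2 * x^3 + 135/8 * x^5)) * urabe_f [:-1,0,-45/8::real:] [:0,-225/8::real:] x = 1"
      unfolding urabe_f_def P1 using n by (simp add: field_simps pderiv_pCons; algebra)
  qed (use dpos in auto)
  then show ?thesis by (rule urabe_setup.main)
qed




lemma inst4:
  fixes b c :: real
  shows "isochronous_center (\<lambda>(x::real, y::real).
     (- y + c^2/2 * x^2 * y + x^2 - c^2/2 * x^4,
      x + c * y^2 - 2 * x * y - c/2 * x^2 + c^2 * x * y^2 - 2 * c * x^2 * y + 2 * x^3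
        - c^2 * x^3 * y + c * x^4)) \<and> zero_urabe (\<lambda>(x::real, y::real).
     (- y + c^2/2 * x^2 * y + x^2 - c^2/2 * x^4,
      x + c * y^2 - 2 * x * y - c/2 * x^2 + c^2 * x * y^2 - 2 * c * x^2 * y + 2 * x^3
        - c^2 * x^3 * y + c * x^4))"
proof -
  define \<delta> where "\<delta> = 1 / (1 + \<bar>c\<bar>)"
  have dpos: "\<delta> > 0" by (simp add: \<delta>_def add_pos_nonneg)
  have mpos: "1 - c^2/2 * x^2 > 0 \<and> 1 + c * x * sqrt 2 / 2 > 0 \<and> 1 - c * x * sqrt 2 / 2 > 0" if "\<bar>x\<bar> < \<delta>" for x
  proof -
    have "\<bar>c * x\<bar> \<le> \<bar>c\<bar> * \<delta>" using that by (simp add: abs_mult mult_left_mono)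
    also have "\<dots> < 1" by (simp add: \<delta>_def field_simps)
    finally have cx: "\<bar>c * x\<bar> < 1" .
    have w: "sqrt 2 < (2::real)" "0 < sqrt (2::real)"
      by (auto intro!: real_less_lsqrt)
    have "\<bar>c * x * sqrt 2 / 2\<bar> = \<bar>c * x\<bar> * (sqrt 2 / 2)" by (simp add: abs_mult)
    also have "\<dots> < 1"
    proof -
      have "\<bar>c * x\<bar> * (sqrt 2 / 2) \<le> 1 * (sqrt 2 / 2)" using cx w by (intro mult_right_mono) auto
      then show ?thesis using w by linarith
    qed
    finally have s: "\<bar>c * x * sqrt 2 / 2\<bar> < 1" .
    have "(c * x)\<^sup>2 < 1" using cx by (simp add: abs_square_less_1)
    then have "c^2/2 * x^2 < 1" by (simp add: power_mult_distrib)
    then show ?thesis using s by (auto simp: abs_less_iff)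
  qed

  have "urabe_setup (\<lambda>(x::real, y::real).
     (- y + c^2/2 * x^2 * y + x^2 - c^2/2 * x^4,
      x + c * y^2 - 2 * x * y - c/2 * x^2 + c^2 * x * y^2 - 2 * c * x^2 * y + 2 * x^3
        - c^2 * x^3 * y + c * x^4))
     [:0,0,1,0,-(c^2/2):] [:-1,0,(c^2/2):] [:0,1,-c/2,2,c:] [:0,-2,-2*c,-(c^2):] [:c,(c^2):]
     (\<lambda>x. sqrt 2 / 2 * (ln (1 + c * x * sqrt 2 / 2) - ln (1 - c * x * sqrt 2 / 2)) - 2 * ln (1 - c^2/2 * x^2))
     (\<lambda>x. (1 - c^2/2 * x^2) * (x - c/2 * x^2))
     (\<lambda>x. - (c^2) * x * (x - c/2 * x^2) + (1 - c^2/2 * x^2) * (1 - c * x))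
     \<delta>"
  proof (unfold_locales)
    show "\<forall>x y. (\<lambda>(x::real, y::real).
     (- y + c^2/2 * x^2 * y + x^2 - c^2/2 * x^4,
      x + c * y^2 - 2 * x * y - c/2 * x^2 + c^2 * x * y^2 - 2 * c * x^2 * y + 2 * x^3
        - c^2 * x^3 * y + c * x^4)) (x, y) = (poly [:0,0,1,0,-(c^2/2):] x + poly [:-1,0,(c^2/2):] x * y, poly [:0,1,-c/2,2,c:] x + poly [:0,-2,-2*c,-(c^2):] x * y + poly [:c,(c^2):] x * y\<^sup>2)"
      by (simp add: algebra_simps power2_eq_square power3_eq_cube power4_eq_xxxx)
  next
    show "\<forall>x. poly [:-1,0,(c^2/2):] x \<noteq> 0 \<longrightarrow>
       - poly (pderiv [:-1,0,(c^2/2):]) x * poly [:0,0,1,0,-(c^2/2):] x / poly [:-1,0,(c^2/2):] x + poly [:0,-2,-2*c,-(c^2):] x +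
         poly (pderiv [:0,0,1,0,-(c^2/2):]) x - 2 * poly [:c,(c^2):] x * poly [:0,0,1,0,-(c^2/2):] x / poly [:-1,0,(c^2/2):] x = 0"
      by (auto simp: pderiv_pCons field_simps; algebra)
  next
    fix x :: real assume x: "\<bar>x\<bar> < \<delta>"
    note m = mpos[OF x]
    have P1: "poly [:-1,0,(c^2/2):] x = -(1 - c^2/2 * x^2)" by (simp add: algebra_simps power2_eq_square)
    have n: "1 - c^2/2 * x^2 \<noteq> 0" using m by simp
    show "poly [:-1,0,(c^2/2):] x \<noteq> 0" unfolding P1 using n by simp
    show "((\<lambda>x. sqrt 2 / 2 * (ln (1 + c * x * sqrt 2 / 2) - ln (1 - c * x * sqrt 2 / 2)) - 2 * ln (1 - c^2/2 * x^2)) has_real_derivative urabe_f [:-1,0,(c^2/2):] [:c,(c^2):] x) (at x)"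
    proof -
      let ?s = "c * x * sqrt 2 / 2"
      have m1: "1 + ?s > 0" "1 - ?s > 0" "1 - c^2/2 * x^2 > 0" using m by auto
      have d1: "((\<lambda>x. ln (1 + c * x * sqrt 2 / 2)) has_real_derivative (c * sqrt 2 / 2) / (1 + ?s)) (at x)"
        using m1 by (auto intro!: derivative_eq_intros)
      have d2: "((\<lambda>x. ln (1 - c * x * sqrt 2 / 2)) has_real_derivative (- (c * sqrt 2 / 2)) / (1 - ?s)) (at x)"
        using m1 by (auto intro!: derivative_eq_intros)
      have d3: "((\<lambda>x. ln (1 - c^2/2 * x^2)) has_real_derivative (- (c^2 * x)) / (1 - c^2/2 * x^2)) (at x)"
        using m1 by (auto intro!: derivative_eq_intros)
      have D: "((\<lambda>x. sqrt 2 / 2 * (ln (1 + c * x * sqrt 2 / 2) - ln (1 - c * x * sqrt 2 / 2)) - 2 * ln (1 - c^2/2 * x^2)) has_real_derivative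
          sqrt 2 / 2 * ((c * sqrt 2 / 2) / (1 + ?s) - (- (c * sqrt 2 / 2)) / (1 - ?s)) - 2 * ((- (c^2 * x)) / (1 - c^2/2 * x^2))) (at x)"
        by (intro DERIV_diff DERIV_cmult d1 d2 d3)
      have gen: "w / 2 * ((c * w / 2) / (1 + c * x * w / 2) - (- (c * w / 2)) / (1 - c * x * w / 2)) - 2 * ((- (c^2 * x)) / (1 - c^2/2 * x^2))
           = - (c + c^2 * x + c^2 * x) / (- (1 - c^2/2 * x^2))"
        if "w * w = 2" "1 + c * x * w / 2 \<noteq> 0" "1 - c * x * w / 2 \<noteq> 0" "1 - c^2/2 * x^2 \<noteq> 0" for w :: real
      proof -
        have p: "(1 + c * x * w / 2) * (1 - c * x * w / 2) = 1 - c^2/2 * x^2"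
          using that(1) by (simp add: algebra_simps power2_eq_square)
        have "w / 2 * ((c * w / 2) / (1 + c * x * w / 2) - (- (c * w / 2)) / (1 - c * x * w / 2))
           = w * w / 4 * c * (1 / (1 + c * x * w / 2) + 1 / (1 - c * x * w / 2))"
          by (simp add: algebra_simps add_divide_distrib)
        also have "1 / (1 + c * x * w / 2) + 1 / (1 - c * x * w / 2) = 2 / ((1 + c * x * w / 2) * (1 - c * x * w / 2))"
          using that(2,3) by (simp add: field_simps)
        also have "\<dots> = 2 / (1 - c^2/2 * x^2)" unfolding p ..
        also have "w * w / 4 * c * (2 / (1 - c^2/2 * x^2)) = c / (1 - c^2/2 * x^2)"
          using that(1) by simp
        finally have e: "w / 2 * ((c * w / 2) / (1 + c * x * w / 2) - (- (c * w / 2)) / (1 - c * x * w / 2)) = c / (1 - c^2/2 * x^2)" .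
        have g2: "cc / M - 2 * (- d / M) = - (cc + d + d) / (- M)" if "M \<noteq> 0" for M d cc :: real
          using that by (simp add: field_simps)
        show ?thesis unfolding e by (rule g2) (use that(4) in simp)
      qed
      have uf: "urabe_f [:-1,0,(c^2/2):] [:c,(c^2):] x = - (c + c^2 * x + c^2 * x) / (- (1 - c^2/2 * x^2))"
        by (simp add: urabe_f_def pderiv_pCons algebra_simps power2_eq_square)
      have eq: "sqrt 2 / 2 * ((c * sqrt 2 / 2) / (1 + ?s) - (- (c * sqrt 2 / 2)) / (1 - ?s)) - 2 * ((- (c^2 * x)) / (1 - c^2/2 * x^2))
          = urabe_f [:-1,0,(c^2/2):] [:c,(c^2):] x"
        unfolding uf by (rule gen) (use m1 in auto)
      show ?thesis using D unfolding eq .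
    qed
    show "(1 - c^2/2 * x^2) * (x - c/2 * x^2) = urabe_g [:0,0,1,0,-(c^2/2):] [:-1,0,(c^2/2):] [:0,1,-c/2,2,c:] [:0,-2,-2*c,-(c^2):] [:c,(c^2):] x"
    proof -
      have P0: "poly [:0,0,1,0,-(c^2/2):] x = x^2 * (1 - c^2/2 * x^2)" by (simp add: algebra_simps power2_eq_square power4_eq_xxxx)
      show ?thesis unfolding urabe_g_def g_red[OF P1 P0 n]
        by (simp add: algebra_simps power2_eq_square power3_eq_cube power4_eq_xxxx)
    qed
    show "((\<lambda>x. (1 - c^2/2 * x^2) * (x - c/2 * x^2)) has_real_derivative - (c^2) * x * (x - c/2 * x^2) + (1 - c^2/2 * x^2) * (1 - c * x)) (at x)"
      by (auto intro!: derivative_eq_intros simp: field_simps power2_eq_square)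
    show "- (c^2) * x * (x - c/2 * x^2) + (1 - c^2/2 * x^2) * (1 - c * x) + ((1 - c^2/2 * x^2) * (x - c/2 * x^2)) * urabe_f [:-1,0,(c^2/2):] [:c,(c^2):] x = 1"
      unfolding urabe_f_def f_red[OF P1 n]
      by (simp add: pderiv_pCons field_simps power2_eq_square power3_eq_cube; simp add: algebra_simps)
  qed (use dpos in auto)
  then show ?thesis by (rule urabe_setup.main)
qed


theorem theorem4p2:
  fixes b c :: real
  defines "V1 \<equiv> (\<lambda>(x::real, y::real).
     (- y + b/3 * x * y + x^2 - b/3 * x^3,
      x + b * y^2 - 2 * x * y - b/3 * x^2 - 4*b/3 * x^2 * y + (b^2/27 + 2) * x^3 + b/3 * x^4))"
    and "V2 \<equiv> (\<lambda>(x::real, y::real).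
     (- y + b/4 * x * y + x^2 - b/4 * x^3,
      x + b * y^2 - 2 * x * y - 3*b/8 * x^2 - 3*b/2 * x^2 * y + (b^2/16 + 2) * x^3
        + (b/2 - b^3/256) * x^4))"
    and "V3 \<equiv> (\<lambda>(x::real, y::real).
     (- y - 45/8 * x^2 * y + x^2 + 45/8 * x^4,
      x - 2 * x * y - 225/8 * x * y^2 + 19/2 * x^3 + 45 * x^3 * y))"
    and "V4 \<equiv> (\<lambda>(x::real, y::real).
     (- y + c^2/2 * x^2 * y + x^2 - c^2/2 * x^4,
      x + c * y^2 - 2 * x * y - c/2 * x^2 + c^2 * x * y^2 - 2 * c * x^2 * y + 2 * x^3
        - c^2 * x^3 * y + c * x^4))"
  shows "(isochronous_center V1 \<and> zero_urabe V1) \<and>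
         (isochronous_center V2 \<and> zero_urabe V2) \<and>
         (isochronous_center V3 \<and> zero_urabe V3) \<and>
         (isochronous_center V4 \<and> zero_urabe V4)"
  unfolding V1_def V2_def V3_def V4_def
  using inst1[of b] inst2[of b] inst3 inst4[of c] by blast

end
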